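(* Let $T\in\mathcal{K}(V)$ with $\rho_S(T)\neq\emptyset$ and let $E_1,E_2$ be projections on $V$ (i.e. $E_i\in\mathcal{B}(V)$, $E_i^2=E_i$) such that $E_1+E_2=\mathcal{I}$ (hence $E_1E_2=E_2E_1=0$). Denote $V_i:=E_i(V)$ and $\operatorname{dom}(T_i):=E_i(\operatorname{dom}(T))$, and assume that $\operatorname{dom}(T_i)\subset\operatorname{dom}(T)$, $T(\operatorname{dom}(T_i))\subset V_i$ and that $T_i:=T|_{\operatorname{dom}(T_i)}$ is a closed operator on the right Banach module $V_i$, $i=1,2$. Then (i) $E_iTv=TE_iv$ for $v\in\operatorname{dom}(T)$; (ii) $\operatorname{dom}(T_i^2)=E_i(\operatorname{dom}(T^2))$ for $i\in\{1,2\}$; (iii) $\operatorname{ran}(\mathcal{Q}_s(T))=\operatorname{ran}(\mathcal{Q}_s(T_1))\oplus\operatorname{ran}(\mathcal{Q}_s(T_2))$ for every $s\in\mathbb{F}_0$; (iv) $\sigma_S(T)=\sigma_S(T_1)\cup\sigma_S(T_2)$; (v) $\sigma_{Sp}(T)=\sigma_{Sp}(T_1)\cup\sigma_{Sp}(T_2)$. If moreover $\sigma_S(T_1)\cap\sigma_S(T_2)=\emptyset$, then (vi) $\sigma_{Sc}(T)=\sigma_{Sc}(T_1)\cup\sigma_{Sc}(T_2)$ and (vii) $\sigma_{Sr}(T)=\sigma_{Sr}(T_1)\cup\sigma_{Sr}(T_2)$.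
   Context: Standing setting: either (a) $\mathbb{F}_0=\mathbb{F}=\mathbb{H}$, $V$ a two-sided quaternionic Banach space, $\mathcal{K}(V)$ the closed right linear operators on $V$; or (b) $\mathbb{F}=\mathbb{R}_n$ the real Clifford algebra generated by $e_1,\dots,e_n$, $\mathbb{F}_0=\mathbb{R}^{n+1}$ the paravectors $x_0+\sum x_ie_i$, $V=V_{\mathbb{R}}\otimes\mathbb{R}_n$ for a real Banach space $V_{\mathbb{R}}$, $\mathcal{K}(V)$ the operators of paravector type $T=T_0+\sum_{i=1}^nT_ie_i$ with closed $T_i$ on $V_{\mathbb{R}}$. $\mathcal{B}(V)$ bounded everywhere defined right linear operators, $\mathcal{I}$ identity. For a closed right linear operator $A$ on a right Banach module $W$ (here $W=V$ or $W=V_i$) and $s\in\mathbb{F}_0$, $\mathcal{Q}_s(A)=A^2-2\Re(s)A+|s|^2\mathcal{I}$ on $\operatorname{dom}(A^2)$; $\rho_S(A)=\{s\in\mathbb{F}_0:\mathcal{Q}_s(A)$ has a bounded inverse defined on all of $W\}$, $\sigma_S(A)=\mathbb{F}_0\setminus\rho_S(A)$. The point $S$-spectrum $\sigma_{Sp}(A)$ is the set of $s\in\mathbb{F}_0$ with $\ker\mathcal{Q}_s(A)\neq\{0\}$; the continuous $S$-spectrum $\sigma_{Sc}(A)$ is the set of $s$ with $\ker\mathcal{Q}_s(A)=\{0\}$ and $\operatorname{ran}\mathcal{Q}_s(A)$ dense in but different from $W$; the residual $S$-spectrum $\sigma_{Sr}(A)$ is the set of $s$ with $\ker\mathcal{Q}_s(A)=\{0\}$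 and $\operatorname{ran}\mathcal{Q}_s(A)$ not dense in $W$. $\oplus$ denotes a direct sum of right submodules. *)

theory Defs
  imports "HOL-Analysis.Analysis"
begin

text \<open>Operators are given by a domain D and a function f (only relevant on D).
  A right Banach module W is a closed right submodule of the ambient Banach space.\<close>

definition rsubmod :: "('v::real_normed_vector \<Rightarrow> 'f \<Rightarrow> 'v) \<Rightarrow> 'v set \<Rightarrow> bool" where
  "rsubmod rmul M \<longleftrightarrow> 0 \<in> M \<and> (\<forall>x\<in>M. \<forall>y\<in>M. x + y \<in> M) \<and> (\<forall>x\<in>M. \<forall>a. rmul x a \<in> M)"

definition rlinear_on :: "('v::real_normed_vector \<Rightarrow> 'f \<Rightarrow> 'v) \<Rightarrow> 'v set \<Rightarrow> ('v \<Rightarrow> 'v) \<Rightarrow> bool" where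
  "rlinear_on rmul D f \<longleftrightarrow> rsubmod rmul D \<and> (\<forall>x\<in>D. \<forall>y\<in>D. f (x + y) = f x + f y)
      \<and> (\<forall>x\<in>D. \<forall>a. f (rmul x a) = rmul (f x) a)"

definition closed_rop :: "('v::real_normed_vector \<Rightarrow> 'f \<Rightarrow> 'v) \<Rightarrow> 'v set \<Rightarrow> 'v set \<Rightarrow> ('v \<Rightarrow> 'v) \<Rightarrow> bool" where
  "closed_rop rmul W D f \<longleftrightarrow> rsubmod rmul W \<and> closed W \<and> D \<subseteq> W \<and> rlinear_on rmul D f
      \<and> f ` D \<subseteq> W \<and> closed {(x, f x) | x. x \<in> D}"

definition bounded_rop :: "('v::real_normed_vector \<Rightarrow> 'f \<Rightarrow> 'v) \<Rightarrow> ('v \<Rightarrow> 'v) \<Rightarrow> bool" where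
  "bounded_rop rmul E \<longleftrightarrow> rlinear_on rmul UNIV E \<and> (\<exists>K. \<forall>x. norm (E x) \<le> K * norm x)"

definition dom2 :: "'v set \<Rightarrow> ('v \<Rightarrow> 'v) \<Rightarrow> 'v set" where
  "dom2 D f = {x \<in> D. f x \<in> D}"

text \<open>Q_s(A) x = A^2 x - 2 Re(s) A x + |s|^2 x, with r = Re(s), m = |s|\<close>
definition Qop :: "('v::real_normed_vector \<Rightarrow> 'v) \<Rightarrow> real \<Rightarrow> real \<Rightarrow> 'v \<Rightarrow> 'v" where
  "Qop f r m x = f (f x) - (2 * r) *\<^sub>R f x + (m ^ 2) *\<^sub>R x"

definition ranQ :: "('f \<Rightarrow> real) \<Rightarrow> ('f \<Rightarrow> real) \<Rightarrow> 'f \<Rightarrow> 'v::real_normed_vector set \<Rightarrow> ('v \<Rightarrow> 'v) \<Rightarrow> 'v set" where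
  "ranQ re nrm s D f = Qop f (re s) (nrm s) ` dom2 D f"

definition kerQ_trivial :: "('f \<Rightarrow> real) \<Rightarrow> ('f \<Rightarrow> real) \<Rightarrow> 'f \<Rightarrow> 'v::real_normed_vector set \<Rightarrow> ('v \<Rightarrow> 'v) \<Rightarrow> bool" where
  "kerQ_trivial re nrm s D f \<longleftrightarrow> (\<forall>x\<in>dom2 D f. Qop f (re s) (nrm s) x = 0 \<longrightarrow> x = 0)"

definition rhoS :: "'f set \<Rightarrow> ('f \<Rightarrow> real) \<Rightarrow> ('f \<Rightarrow> real) \<Rightarrow> 'v::real_normed_vector set \<Rightarrow> 'v set \<Rightarrow> ('v \<Rightarrow> 'v) \<Rightarrow> 'f set" where
  "rhoS F0 re nrm W D f = {s \<in> F0. \<exists>B.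
      (\<forall>w\<in>W. B w \<in> dom2 D f \<and> Qop f (re s) (nrm s) (B w) = w)
    \<and> (\<forall>x\<in>dom2 D f. B (Qop f (re s) (nrm s) x) = x)
    \<and> (\<exists>K. \<forall>w\<in>W. norm (B w) \<le> K * norm w)}"

definition sigmaS :: "'f set \<Rightarrow> ('f \<Rightarrow> real) \<Rightarrow> ('f \<Rightarrow> real) \<Rightarrow> 'v::real_normed_vector set \<Rightarrow> 'v set \<Rightarrow> ('v \<Rightarrow> 'v) \<Rightarrow> 'f set" where
  "sigmaS F0 re nrm W D f = F0 - rhoS F0 re nrm W D f"

definition sigmaSp :: "'f set \<Rightarrow> ('f \<Rightarrow> real) \<Rightarrow> ('f \<Rightarrow> real) \<Rightarrow> 'v::real_normed_vector set \<Rightarrow> ('v \<Rightarrow> 'v) \<Rightarrow> 'f set" where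
  "sigmaSp F0 re nrm D f = {s \<in> F0. \<not> kerQ_trivial re nrm s D f}"

definition sigmaSc :: "'f set \<Rightarrow> ('f \<Rightarrow> real) \<Rightarrow> ('f \<Rightarrow> real) \<Rightarrow> 'v::real_normed_vector set \<Rightarrow> 'v set \<Rightarrow> ('v \<Rightarrow> 'v) \<Rightarrow> 'f set" where
  "sigmaSc F0 re nrm W D f = {s \<in> F0. kerQ_trivial re nrm s D f
      \<and> W \<subseteq> closure (ranQ re nrm s D f) \<and> ranQ re nrm s D f \<noteq> W}"

definition sigmaSr :: "'f set \<Rightarrow> ('f \<Rightarrow> real) \<Rightarrow> ('f \<Rightarrow> real) \<Rightarrow> 'v::real_normed_vector set \<Rightarrow> 'v set \<Rightarrow> ('v \<Rightarrow> 'v) \<Rightarrow> 'f set" where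
  "sigmaSr F0 re nrm W D f = {s \<in> F0. kerQ_trivial re nrm s D f
      \<and> \<not> W \<subseteq> closure (ranQ re nrm s D f)}"

definition Thm17_claim ::
  "('v::real_normed_vector \<Rightarrow> 'f \<Rightarrow> 'v) \<Rightarrow> 'f set \<Rightarrow> ('f \<Rightarrow> real) \<Rightarrow> ('f \<Rightarrow> real)
    \<Rightarrow> ('v set \<Rightarrow> ('v \<Rightarrow> 'v) \<Rightarrow> bool) \<Rightarrow> bool" where
  "Thm17_claim rmul F0 re nrm inK \<longleftrightarrow>
    (\<forall>D f E1 E2.
       inK D f
     \<and> rhoS F0 re nrm UNIV D f \<noteq> {}
     \<and> bounded_rop rmul E1 \<and> bounded_rop rmul E2
     \<and> E1 \<circ> E1 = E1 \<and> E2 \<circ> E2 = E2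
     \<and> (\<forall>x. E1 x + E2 x = x)
     \<and> (\<forall>E\<in>{E1, E2}. E ` D \<subseteq> D \<and> f ` (E ` D) \<subseteq> range E
                       \<and> closed_rop rmul (range E) (E ` D) f)
     \<longrightarrow>
       \<comment> \<open>(i)\<close>
       (\<forall>E\<in>{E1, E2}. \<forall>v\<in>D. E (f v) = f (E v))
       \<comment> \<open>(ii)\<close>
     \<and> (\<forall>E\<in>{E1, E2}. dom2 (E ` D) f = E ` (dom2 D f))
       \<comment> \<open>(iii)\<close>
     \<and> (\<forall>s\<in>F0. ranQ re nrm s D f
              = {x + y | x y. x \<in> ranQ re nrm s (E1 ` D) f \<and> y \<in> ranQ re nrm s (E2 ` D) f}
            \<and> ranQ re nrm s (E1 ` D) f \<inter> ranQ re nrm s (E2 ` D) f = {0})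
       \<comment> \<open>(iv)\<close>
     \<and> sigmaS F0 re nrm UNIV D f
         = sigmaS F0 re nrm (range E1) (E1 ` D) f \<union> sigmaS F0 re nrm (range E2) (E2 ` D) f
       \<comment> \<open>(v)\<close>
     \<and> sigmaSp F0 re nrm D f = sigmaSp F0 re nrm (E1 ` D) f \<union> sigmaSp F0 re nrm (E2 ` D) f
       \<comment> \<open>(vi), (vii)\<close>
     \<and> (sigmaS F0 re nrm (range E1) (E1 ` D) f \<inter> sigmaS F0 re nrm (range E2) (E2 ` D) f = {}
        \<longrightarrow> sigmaSc F0 re nrm UNIV D f
              = sigmaSc F0 re nrm (range E1) (E1 ` D) f \<union> sigmaSc F0 re nrm (range E2) (E2 ` D) f
          \<and> sigmaSr F0 re nrm UNIV D f
              = sigmaSr F0 re nrm (range E1) (E1 ` D) f \<union> sigmaSr F0 re nrm (range E2) (E2 ` D) f))"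

datatype quat = Quat (qre: real) (qi: real) (qj: real) (qk: real)

definition qadd :: "quat \<Rightarrow> quat \<Rightarrow> quat" where
  "qadd p q = Quat (qre p + qre q) (qi p + qi q) (qj p + qj q) (qk p + qk q)"

definition qmul :: "quat \<Rightarrow> quat \<Rightarrow> quat" where
  "qmul p q = Quat
     (qre p * qre q - qi p * qi q - qj p * qj q - qk p * qk q)
     (qre p * qi q + qi p * qre q + qj p * qk q - qk p * qj q)
     (qre p * qj q - qi p * qk q + qj p * qre q + qk p * qi q)
     (qre p * qk q + qi p * qj q - qj p * qi q + qk p * qre q)"

definition qnorm :: "quat \<Rightarrow> real" where
  "qnorm q = sqrt ((qre q)\<^sup>2 + (qi q)\<^sup>2 + (qj q)\<^sup>2 + (qk q)\<^sup>2)"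

definition qof_real :: "real \<Rightarrow> quat" where
  "qof_real r = Quat r 0 0 0"

definition two_sided_quat_banach :: "(quat \<Rightarrow> 'v::banach \<Rightarrow> 'v) \<Rightarrow> ('v \<Rightarrow> quat \<Rightarrow> 'v) \<Rightarrow> bool" where
  "two_sided_quat_banach lmul rmul \<longleftrightarrow>
     (\<forall>r x. lmul (qof_real r) x = r *\<^sub>R x \<and> rmul x (qof_real r) = r *\<^sub>R x)
   \<and> (\<forall>a x y. lmul a (x + y) = lmul a x + lmul a y \<and> rmul (x + y) a = rmul x a + rmul y a)
   \<and> (\<forall>a b x. lmul (qadd a b) x = lmul a x + lmul b x \<and> rmul x (qadd a b) = rmul x a + rmul x b)
   \<and> (\<forall>a b x. lmul a (lmul b x) = lmul (qmul a b) x \<and> rmul (rmul x a) b = rmul x (qmul a b))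
   \<and> (\<forall>a b x. lmul a (rmul x b) = rmul (lmul a x) b)
   \<and> (\<forall>a x. norm (lmul a x) = qnorm a * norm x \<and> norm (rmul x a) = qnorm a * norm x)"

text \<open>Generators e_i indexed by a finite linearly ordered type 'n with n = CARD('n).
  Elements of R_n: real coefficient vectors indexed by blades A (subsets of 'n), e_A = e_a1...e_ak (a1<...<ak).
  Elements of V_R \<otimes> R_n: 'w-valued coefficient vectors indexed by blades.\<close>

definition cl_sign :: "'n::{finite,linorder} set \<Rightarrow> 'n set \<Rightarrow> real" where
  "cl_sign A B = (-1) ^ card {(a, b). a \<in> A \<and> b \<in> B \<and> b < a} * (-1) ^ card (A \<inter> B)"

text \<open>e_A e_B = cl_sign A B e_(A sym.diff. B)\<close>

definition cl_rmul :: "('w::real_vector ^ ('n::{finite,linorder} set)) \<Rightarrow> real ^ ('n set) \<Rightarrow> 'w ^ ('n set)" where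
  "cl_rmul v a = (\<chi> C. \<Sum>A\<in>UNIV. \<Sum>B\<in>UNIV.
      if (A - B) \<union> (B - A) = C then (cl_sign A B * a $ B) *\<^sub>R (v $ A) else 0)"

definition paravectors :: "(real ^ ('n::{finite,linorder} set)) set" where
  "paravectors = {a. \<forall>B. 2 \<le> card B \<longrightarrow> a $ B = 0}"

definition cl_re :: "real ^ ('n::{finite,linorder} set) \<Rightarrow> real" where
  "cl_re a = a $ {}"

definition cl_abs :: "real ^ ('n::{finite,linorder} set) \<Rightarrow> real" where
  "cl_abs a = sqrt (\<Sum>B\<in>{B. card B \<le> 1}. (a $ B)\<^sup>2)"

definition real_closed_op :: "'w::real_normed_vector set \<Rightarrow> ('w \<Rightarrow> 'w) \<Rightarrow> bool" where
  "real_closed_op D g \<longleftrightarrow> subspace D \<and> (\<forall>x\<in>D. \<forall>y\<in>D. g (x + y) = g x + g y)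
      \<and> (\<forall>x\<in>D. \<forall>r. g (r *\<^sub>R x) = r *\<^sub>R g x) \<and> closed {(x, g x) | x. x \<in> D}"

text \<open>operators of paravector type T = T_0 + sum_i T_i e_i (index None for T_0, Some i for T_i),
  acting as T(sum_A v_A e_A) = sum_A T_0 v_A e_A + sum_i sum_A T_i v_A e_i e_A,
  with dom(T) = (intersection of the dom(T_i)) \<otimes> R_n\<close>
definition paravector_type_op :: "('w::real_normed_vector ^ ('n::{finite,linorder} set)) set
    \<Rightarrow> ('w ^ ('n set) \<Rightarrow> 'w ^ ('n set)) \<Rightarrow> bool" where
  "paravector_type_op D f \<longleftrightarrow> (\<exists>(Tdom :: 'n option \<Rightarrow> 'w set) Tfun.
      (\<forall>j. real_closed_op (Tdom j) (Tfun j))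
    \<and> D = {v. \<forall>A j. v $ A \<in> Tdom j}
    \<and> (\<forall>v\<in>D. f v = (\<chi> C. Tfun None (v $ C)
          + (\<Sum>i\<in>UNIV. \<Sum>A\<in>UNIV. if ({i} - A) \<union> (A - {i}) = C
                then cl_sign {i} A *\<^sub>R Tfun (Some i) (v $ A) else 0))))"

end

theory Submission imports Defs begin

lemma rhoSI: "s \<in> F0 \<Longrightarrow> (\<And>w. w\<in>W \<Longrightarrow> B w \<in> dom2 D f \<and> Qop f (re s) (nrm s) (B w) = w)
  \<Longrightarrow> (\<And>x. x\<in>dom2 D f \<Longrightarrow> B (Qop f (re s) (nrm s) x) = x)
  \<Longrightarrow> (\<And>w. w\<in>W \<Longrightarrow> norm (B w) \<le> K * norm w) \<Longrightarrow> s \<in> rhoS F0 re nrm W D f"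
  unfolding rhoS_def mem_Collect_eq
  apply (rule conjI, assumption)
  apply (rule exI[where x=B])
  apply (rule conjI, rule ballI, blast)
  apply (rule conjI, rule ballI, blast)
  apply (rule exI[where x=K], rule ballI, blast)
  done

locale pp =
  fixes D :: "'v::real_normed_vector set" and f E1 E2 :: "'v \<Rightarrow> 'v"
  assumes D0: "0 \<in> D" and Dadd: "x\<in>D \<Longrightarrow> y\<in>D \<Longrightarrow> x+y\<in>D"
   and fadd: "x\<in>D \<Longrightarrow> y\<in>D \<Longrightarrow> f(x+y) = f x + f y"
   and E1add: "E1 (x+y) = E1 x + E1 y" and E2add: "E2 (x+y) = E2 x + E2 y"
   and E1scale: "E1 (r *\<^sub>R x) = r *\<^sub>R E1 x" and E2scale: "E2 (r *\<^sub>R x) = r *\<^sub>R E2 x"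
   and E1bd: "\<exists>K. \<forall>x. norm(E1 x) \<le> K * norm x"
   and E2bd: "\<exists>K. \<forall>x. norm(E2 x) \<le> K * norm x"
   and E1idem: "E1 (E1 x) = E1 x" and E2idem: "E2 (E2 x) = E2 x"
   and Esum: "E1 x + E2 x = x"
   and E1D: "E1 ` D \<subseteq> D" and E2D: "E2 ` D \<subseteq> D"
   and f1: "f ` (E1 ` D) \<subseteq> range E1" and f2: "f ` (E2 ` D) \<subseteq> range E2"
begin

lemma E1lin: "linear E1"
  by (rule linearI) (auto simp: E1add E1scale)

lemma E1bl: "bounded_linear E1"
proof -
  obtain K where K: "\<forall>x. norm(E1 x) \<le> K * norm x" using E1bd by blast
  show ?thesis by (rule bounded_linear_intro[where K=K]) (auto simp: E1add E1scale K mult.commute)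
qed

lemma E1cont: "continuous_on S E1"
  using E1bl linear_continuous_on by blast

lemma E1E2: "E1 (E2 x) = 0"
proof -
  have "E2 x = x - E1 x" using Esum[of x] by (simp add: algebra_simps)
  then show ?thesis using linear_diff[OF E1lin] by (simp add: E1idem)
qed

lemma E1_on1: "y \<in> range E1 \<Longrightarrow> E1 y = y" using E1idem by auto
lemma E1_on2: "y \<in> range E2 \<Longrightarrow> E1 y = 0" using E1E2 by auto

lemma f0: "f 0 = 0" using fadd[OF D0 D0] by simp

lemma Dsum1: "v \<in> D \<Longrightarrow> E1 v \<in> D" using E1D by auto
lemma Dsum2: "v \<in> D \<Longrightarrow> E2 v \<in> D" using E2D by auto

lemma comm: assumes v: "v \<in> D" shows "E1 (f v) = f (E1 v)"
proof -
  have "f v = f (E1 v) + f (E2 v)" using fadd[OF Dsum1[OF v] Dsum2[OF v]] Esum[of v] by simp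
  moreover have "E1 (f (E1 v)) = f (E1 v)" using f1 v E1_on1 by blast
  moreover have "E1 (f (E2 v)) = 0" using f2 v E1_on2 by blast
  ultimately show ?thesis using E1add by simp
qed

lemma dom2_eq: "dom2 (E1 ` D) f = E1 ` (dom2 D f)"
proof
  show "dom2 (E1 ` D) f \<subseteq> E1 ` (dom2 D f)"
  proof
    fix x assume "x \<in> dom2 (E1 ` D) f"
    then obtain v where v: "v \<in> D" "x = E1 v" and fx: "f x \<in> E1 ` D" by (auto simp: dom2_def)
    have "x \<in> D" using v E1D by auto
    moreover have "f x \<in> D" using fx E1D by auto
    moreover have "E1 x = x" using v E1idem by simp
    ultimately show "x \<in> E1 ` (dom2 D f)" by (auto simp: dom2_def intro!: image_eqI[where x=x])
  qed
next
  show "E1 ` (dom2 D f) \<subseteq> dom2 (E1 ` D) f"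
  proof
    fix y assume "y \<in> E1 ` (dom2 D f)"
    then obtain x where x: "x \<in> D" "f x \<in> D" "y = E1 x" by (auto simp: dom2_def)
    have "f y = E1 (f x)" using comm[OF x(1)] x(3) by simp
    then show "y \<in> dom2 (E1 ` D) f" using x unfolding dom2_def by blast
  qed
qed

lemma dom2_sub: "dom2 (E1 ` D) f \<subseteq> dom2 D f"
  using E1D by (auto simp: dom2_def)

lemma dom2_E1: "x \<in> dom2 D f \<Longrightarrow> E1 x \<in> dom2 (E1 ` D) f"
  using dom2_eq by auto

lemma dom2_add: "x \<in> dom2 D f \<Longrightarrow> y \<in> dom2 D f \<Longrightarrow> x + y \<in> dom2 D f"
  using Dadd fadd by (auto simp: dom2_def)

lemma Qadd: assumes x: "x \<in> dom2 D f" and y: "y \<in> dom2 D f"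
  shows "Qop f r m (x + y) = Qop f r m x + Qop f r m y"
proof -
  have h1: "f (x+y) = f x + f y" using x y fadd by (simp add: dom2_def)
  have h2: "f (f x + f y) = f (f x) + f (f y)" using x y fadd by (simp add: dom2_def)
  show ?thesis unfolding Qop_def h1 h2 by (simp add: scaleR_add_right algebra_simps)
qed

lemma Q0: "Qop f r m 0 = 0" by (simp add: Qop_def f0)

lemma Qcomm: "x \<in> dom2 D f \<Longrightarrow> E1 (Qop f r m x) = Qop f r m (E1 x)"
  using comm linear_diff[OF E1lin] by (auto simp: dom2_def Qop_def E1add E1scale)

lemma rho_restr: "s \<in> rhoS F0 re nrm UNIV D f \<Longrightarrow> s \<in> rhoS F0 re nrm (range E1) (E1`D) f"
proof -
  let ?Q = "Qop f (re s) (nrm s)"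
  assume "s \<in> rhoS F0 re nrm UNIV D f"
  then obtain B K where s: "s \<in> F0" and B1: "\<forall>w\<in>UNIV. B w \<in> dom2 D f \<and> ?Q (B w) = w"
    and B2: "\<forall>x\<in>dom2 D f. B (?Q x) = x" and K: "\<forall>w\<in>UNIV. norm (B w) \<le> K * norm w"
    unfolding rhoS_def by blast
  have A: "B w \<in> dom2 (E1`D) f \<and> ?Q (B w) = w" if "w \<in> range E1" for w
  proof -
    have bw: "B w \<in> dom2 D f" and qb: "?Q (B w) = w" using B1 by auto
    have e1: "E1 (B w) \<in> dom2 (E1`D) f" by (rule dom2_E1[OF bw])
    have e: "E1 (B w) \<in> dom2 D f" using dom2_sub e1 by blast
    have "?Q (E1 (B w)) = E1 (?Q (B w))" using Qcomm[OF bw] by simp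
    also have "\<dots> = w" using qb E1_on1[OF that] by simp
    finally have q: "?Q (E1 (B w)) = w" .
    have "E1 (B w) = B (?Q (E1 (B w)))" using B2 e by simp
    also have "\<dots> = B w" using q by simp
    finally have "E1 (B w) = B w" .
    then show ?thesis using e1 qb by simp
  qed
  have C: "B (?Q x) = x" if "x \<in> dom2 (E1`D) f" for x
  proof -
    have "x \<in> dom2 D f" using dom2_sub that by (rule subsetD)
    then show ?thesis using B2 by simp
  qed
  have K': "norm (B w) \<le> K * norm w" for w using K by simp
  show ?thesis
    apply (rule rhoSI[where B=B and K=K])
    apply (rule s) apply (erule A) apply (erule C) by (rule K')
qed

lemma Q_in1: "x \<in> dom2 (E1 ` D) f \<Longrightarrow> Qop f r m x \<in> range E1"
proof -
  assume x: "x \<in> dom2 (E1 ` D) f"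
  then have "E1 x = x" using E1idem by (auto simp: dom2_def)
  then have "E1 (Qop f r m x) = Qop f r m x" using Qcomm dom2_sub x by auto
  then show ?thesis by (metis rangeI)
qed

end

lemma rho_ker: assumes "s \<in> rhoS F0 re nrm W D' f" "0 \<in> D'" "f 0 = 0"
  shows "kerQ_trivial re nrm s D' f"
proof -
  obtain B where B: "\<forall>x\<in>dom2 D' f. B (Qop f (re s) (nrm s) x) = x"
    using assms(1) by (auto simp: rhoS_def)
  have z: "0 \<in> dom2 D' f" using assms by (simp add: dom2_def)
  have q0: "Qop f (re s) (nrm s) 0 = 0" by (simp add: Qop_def assms)
  have "B 0 = 0" using B z q0 by metis
  then show ?thesis using B by (auto simp: kerQ_trivial_def)
qed

lemma rho_ran: assumes "s \<in> rhoS F0 re nrm W D' f" shows "W \<subseteq> ranQ re nrm s D' f"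
proof
  fix w assume w: "w \<in> W"
  obtain B where B: "\<forall>w\<in>W. B w \<in> dom2 D' f \<and> Qop f (re s) (nrm s) (B w) = w"
    using assms unfolding rhoS_def by blast
  then have "B w \<in> dom2 D' f" "w = Qop f (re s) (nrm s) (B w)" using w by auto
  then show "w \<in> ranQ re nrm s D' f" unfolding ranQ_def by blast
qed

lemma prop_helper: "\<lbrakk> k = (k1 \<and> k2); c = (c1 \<and> c2); r1 \<or> r2; r1 \<Longrightarrow> k1 \<and> p1; r2 \<Longrightarrow> k2 \<and> p2;
   u = (p1 \<and> p2); p1 \<Longrightarrow> c1; p2 \<Longrightarrow> c2 \<rbrakk> \<Longrightarrow>
   ((k \<and> c \<and> \<not>u) = ((k1 \<and> c1 \<and> \<not>p1) \<or> (k2 \<and> c2 \<and> \<not>p2))) \<and> ((k \<and> \<not>c) = ((k1 \<and> \<not>c1) \<or> (k2 \<and> \<not>c2)))"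
  by blast

locale ppb = a: pp D f E1 E2 + b: pp D f E2 E1 for D :: "'v::real_normed_vector set" and f E1 E2
begin

lemma ker_eq: "kerQ_trivial re nrm s D f \<longleftrightarrow>
   kerQ_trivial re nrm s (E1 ` D) f \<and> kerQ_trivial re nrm s (E2 ` D) f"
proof
  assume "kerQ_trivial re nrm s D f"
  then show "kerQ_trivial re nrm s (E1 ` D) f \<and> kerQ_trivial re nrm s (E2 ` D) f"
    using a.dom2_sub b.dom2_sub by (auto simp: kerQ_trivial_def)
next
  assume k: "kerQ_trivial re nrm s (E1 ` D) f \<and> kerQ_trivial re nrm s (E2 ` D) f"
  show "kerQ_trivial re nrm s D f"
    unfolding kerQ_trivial_def
  proof (intro ballI impI)
    fix x assume x: "x \<in> dom2 D f" and q: "Qop f (re s) (nrm s) x = 0"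
    have "Qop f (re s) (nrm s) (E1 x) = 0" using a.Qcomm[OF x] q a.E1lin linear_0 by metis
    then have 1: "E1 x = 0" using k a.dom2_E1[OF x] by (auto simp: kerQ_trivial_def)
    have "Qop f (re s) (nrm s) (E2 x) = 0" using b.Qcomm[OF x] q b.E1lin linear_0 by metis
    then have 2: "E2 x = 0" using k b.dom2_E1[OF x] by (auto simp: kerQ_trivial_def)
    show "x = 0" using a.Esum[of x] 1 2 by simp
  qed
qed

lemma ran_eq: "ranQ re nrm s D f
   = {x + y | x y. x \<in> ranQ re nrm s (E1 ` D) f \<and> y \<in> ranQ re nrm s (E2 ` D) f}"
proof
  show "ranQ re nrm s D f \<subseteq> {x + y | x y. x \<in> ranQ re nrm s (E1 ` D) f \<and> y \<in> ranQ re nrm s (E2 ` D) f}"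
  proof
    fix z assume "z \<in> ranQ re nrm s D f"
    then obtain x where x: "x \<in> dom2 D f" and z: "z = Qop f (re s) (nrm s) x" by (auto simp: ranQ_def)
    have "z = Qop f (re s) (nrm s) (E1 x) + Qop f (re s) (nrm s) (E2 x)"
      using a.Qadd[OF a.dom2_sub[THEN subsetD, OF a.dom2_E1[OF x]] b.dom2_sub[THEN subsetD, OF b.dom2_E1[OF x]]]
        a.Esum[of x] z by simp
    then show "z \<in> {x + y | x y. x \<in> ranQ re nrm s (E1 ` D) f \<and> y \<in> ranQ re nrm s (E2 ` D) f}"
      using a.dom2_E1[OF x] b.dom2_E1[OF x] unfolding ranQ_def by blast
  qed
next
  show "{x + y | x y. x \<in> ranQ re nrm s (E1 ` D) f \<and> y \<in> ranQ re nrm s (E2 ` D) f} \<subseteq> ranQ re nrm s D f"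
  proof safe
    fix x y assume "x \<in> ranQ re nrm s (E1 ` D) f" "y \<in> ranQ re nrm s (E2 ` D) f"
    then obtain u v where u: "u \<in> dom2 D f" "x = Qop f (re s) (nrm s) u"
      and v: "v \<in> dom2 D f" "y = Qop f (re s) (nrm s) v"
      using a.dom2_sub b.dom2_sub unfolding ranQ_def by blast
    then show "x + y \<in> ranQ re nrm s D f"
      using a.Qadd[OF u(1) v(1)] a.dom2_add[OF u(1) v(1)] unfolding ranQ_def by (metis (no_types) image_eqI)
  qed
qed

lemma ran_sub1: "ranQ re nrm s (E1 ` D) f \<subseteq> range E1"
  using a.Q_in1 by (auto simp: ranQ_def)
lemma ran_sub2: "ranQ re nrm s (E2 ` D) f \<subseteq> range E2"
  using b.Q_in1 by (auto simp: ranQ_def)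

lemma ran0_1: "0 \<in> ranQ re nrm s (E1 ` D) f"
proof -
  have "0 \<in> dom2 (E1 ` D) f" using a.D0 a.f0 a.E1lin linear_0
    by (metis (no_types, lifting) dom2_def image_eqI mem_Collect_eq)
  then show ?thesis using a.Q0 unfolding ranQ_def by (metis image_eqI)
qed
lemma ran0_2: "0 \<in> ranQ re nrm s (E2 ` D) f"
proof -
  have "0 \<in> dom2 (E2 ` D) f" using a.D0 a.f0 b.E1lin linear_0
    by (metis (no_types, lifting) dom2_def image_eqI mem_Collect_eq)
  then show ?thesis using a.Q0 unfolding ranQ_def by (metis image_eqI)
qed

lemma ran_int: "ranQ re nrm s (E1 ` D) f \<inter> ranQ re nrm s (E2 ` D) f = {0}"
proof -
  have "z = 0" if "z \<in> ranQ re nrm s (E1 ` D) f" "z \<in> ranQ re nrm s (E2 ` D) f" for z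
  proof -
    have "z \<in> range E1" "z \<in> range E2" using that ran_sub1[of re nrm s] ran_sub2[of re nrm s] by blast+
    then show ?thesis using a.E1_on1 a.E1_on2 by metis
  qed
  then show ?thesis using ran0_1 ran0_2 by auto
qed

lemma rho_join: assumes r1: "s \<in> rhoS F0 re nrm (range E1) (E1`D) f"
  and r2: "s \<in> rhoS F0 re nrm (range E2) (E2`D) f"
  shows "s \<in> rhoS F0 re nrm UNIV D f"
proof -
  let ?Q = "Qop f (re s) (nrm s)"
  obtain B1 K1 where s: "s \<in> F0" and B11: "\<forall>w\<in>range E1. B1 w \<in> dom2 (E1`D) f \<and> ?Q (B1 w) = w"
    and B12: "\<forall>x\<in>dom2 (E1`D) f. B1 (?Q x) = x" and K1: "\<forall>w\<in>range E1. norm (B1 w) \<le> K1 * norm w"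
    using r1 unfolding rhoS_def by blast
  obtain B2 K2 where B21: "\<forall>w\<in>range E2. B2 w \<in> dom2 (E2`D) f \<and> ?Q (B2 w) = w"
    and B22: "\<forall>x\<in>dom2 (E2`D) f. B2 (?Q x) = x" and K2: "\<forall>w\<in>range E2. norm (B2 w) \<le> K2 * norm w"
    using r2 unfolding rhoS_def by blast
  obtain C1 where C1: "\<forall>x. norm(E1 x) \<le> C1 * norm x" using a.E1bd by blast
  obtain C2 where C2: "\<forall>x. norm(E2 x) \<le> C2 * norm x" using a.E2bd by blast
  define B where "B w = B1 (E1 w) + B2 (E2 w)" for w
  have d1: "B1 (E1 w) \<in> dom2 D f" for w using B11 a.dom2_sub by blast
  have d2: "B2 (E2 w) \<in> dom2 D f" for w using B21 b.dom2_sub by blast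
  have P1: "\<forall>w\<in>UNIV. B w \<in> dom2 D f \<and> ?Q (B w) = w"
  proof
    fix w :: 'v
    have "?Q (B w) = ?Q (B1 (E1 w)) + ?Q (B2 (E2 w))" unfolding B_def using a.Qadd[OF d1 d2] by blast
    also have "\<dots> = E1 w + E2 w" using B11 B21 by simp
    finally show "B w \<in> dom2 D f \<and> ?Q (B w) = w" using a.Esum a.dom2_add[OF d1 d2] B_def by simp
  qed
  have P2: "\<forall>x\<in>dom2 D f. B (?Q x) = x"
  proof
    fix x assume x: "x \<in> dom2 D f"
    have "B (?Q x) = B1 (?Q (E1 x)) + B2 (?Q (E2 x))" unfolding B_def using a.Qcomm[OF x] b.Qcomm[OF x] by simp
    also have "\<dots> = E1 x + E2 x" using B12 B22 a.dom2_E1[OF x] b.dom2_E1[OF x] by simp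
    finally show "B (?Q x) = x" using a.Esum by simp
  qed
  have P3: "\<forall>w\<in>UNIV. norm (B w) \<le> (max K1 0 * C1 + max K2 0 * C2) * norm w"
  proof
    fix w :: 'v
    have "norm (B w) \<le> norm (B1 (E1 w)) + norm (B2 (E2 w))" unfolding B_def by (rule norm_triangle_ineq)
    also have "norm (B1 (E1 w)) \<le> max K1 0 * (C1 * norm w)"
    proof -
      have "norm (B1 (E1 w)) \<le> K1 * norm (E1 w)" using K1 by blast
      also have "\<dots> \<le> max K1 0 * norm (E1 w)" by (intro mult_right_mono) auto
      also have "\<dots> \<le> max K1 0 * (C1 * norm w)" using C1 by (intro mult_left_mono) auto
      finally show ?thesis .
    qed
    also have "norm (B2 (E2 w)) \<le> max K2 0 * (C2 * norm w)"
    proof -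
      have "norm (B2 (E2 w)) \<le> K2 * norm (E2 w)" using K2 by blast
      also have "\<dots> \<le> max K2 0 * norm (E2 w)" by (intro mult_right_mono) auto
      also have "\<dots> \<le> max K2 0 * (C2 * norm w)" using C2 by (intro mult_left_mono) auto
      finally show ?thesis .
    qed
    finally show "norm (B w) \<le> (max K1 0 * C1 + max K2 0 * C2) * norm w" by (simp add: algebra_simps)
  qed
  show ?thesis unfolding rhoS_def mem_Collect_eq
    apply (rule conjI[OF s], rule exI[where x=B], intro conjI exI[where x="max K1 0 * C1 + max K2 0 * C2"])
    using P1 P2 P3 by auto
qed

lemma rho_eq: "s \<in> rhoS F0 re nrm UNIV D f \<longleftrightarrow>
   s \<in> rhoS F0 re nrm (range E1) (E1`D) f \<and> s \<in> rhoS F0 re nrm (range E2) (E2`D) f"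
proof
  assume h: "s \<in> rhoS F0 re nrm UNIV D f"
  show "s \<in> rhoS F0 re nrm (range E1) (E1`D) f \<and> s \<in> rhoS F0 re nrm (range E2) (E2`D) f"
    using a.rho_restr[OF h] b.rho_restr[OF h] by (rule conjI)
next
  assume "s \<in> rhoS F0 re nrm (range E1) (E1`D) f \<and> s \<in> rhoS F0 re nrm (range E2) (E2`D) f"
  then show "s \<in> rhoS F0 re nrm UNIV D f" by (elim conjE) (rule rho_join)
qed

lemma clos_eq: "UNIV \<subseteq> closure (ranQ re nrm s D f) \<longleftrightarrow>
   range E1 \<subseteq> closure (ranQ re nrm s (E1 ` D) f) \<and> range E2 \<subseteq> closure (ranQ re nrm s (E2 ` D) f)"
  (is "_ \<subseteq> closure ?R \<longleftrightarrow> _ \<subseteq> closure ?R1 \<and> _ \<subseteq> closure ?R2")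
proof
  assume h: "UNIV \<subseteq> closure ?R"
  have i1: "E1 ` ?R \<subseteq> closure ?R1"
  proof
    fix z assume "z \<in> E1 ` ?R"
    then obtain w where w: "w \<in> ?R" "z = E1 w" by blast
    then have "w \<in> {x + y | x y. x \<in> ?R1 \<and> y \<in> ?R2}" by (simp only: ran_eq)
    then obtain x y where xy0: "x \<in> ?R1" "y \<in> ?R2" "w = x + y" by blast
    then have xy: "x \<in> ?R1" "y \<in> ?R2" "z = E1 (x + y)" using w by simp_all
    have "E1 x = x" using subsetD[OF ran_sub1[of re nrm s], OF xy(1)] by (rule a.E1_on1)
    moreover have "E1 y = 0" using subsetD[OF ran_sub2[of re nrm s], OF xy(2)] by (rule a.E1_on2)
    ultimately have "z = x" using xy a.E1add by simp
    then show "z \<in> closure ?R1" using xy closure_subset by blast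
  qed
  have i2: "E2 ` ?R \<subseteq> closure ?R2"
  proof
    fix z assume "z \<in> E2 ` ?R"
    then obtain w where w: "w \<in> ?R" "z = E2 w" by blast
    then have "w \<in> {x + y | x y. x \<in> ?R1 \<and> y \<in> ?R2}" by (simp only: ran_eq)
    then obtain x y where xy0: "x \<in> ?R1" "y \<in> ?R2" "w = x + y" by blast
    then have xy: "x \<in> ?R1" "y \<in> ?R2" "z = E2 (x + y)" using w by simp_all
    have "E2 y = y" using subsetD[OF ran_sub2[of re nrm s], OF xy(2)] by (rule b.E1_on1)
    moreover have "E2 x = 0" using subsetD[OF ran_sub1[of re nrm s], OF xy(1)] by (rule b.E1_on2)
    ultimately have "z = y" using xy a.E2add by simp
    then show "z \<in> closure ?R2" using xy closure_subset by blast
  qed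
  have e1: "E1 ` closure ?R \<subseteq> closure ?R1" by (rule image_closure_subset[OF a.E1cont closed_closure i1])
  have e2: "E2 ` closure ?R \<subseteq> closure ?R2" by (rule image_closure_subset[OF b.E1cont closed_closure i2])
  show "range E1 \<subseteq> closure ?R1 \<and> range E2 \<subseteq> closure ?R2"
  proof (intro conjI subsetI)
    fix w assume w: "w \<in> range E1"
    have wc: "w \<in> closure ?R" using h by (rule subsetD) simp
    have "E1 w \<in> closure ?R1" using e1 imageI[OF wc, of E1] by (rule subsetD)
    then show "w \<in> closure ?R1" using a.E1_on1[OF w] by simp
  next
    fix w assume w: "w \<in> range E2"
    have wc: "w \<in> closure ?R" using h by (rule subsetD) simp
    have "E2 w \<in> closure ?R2" using e2 imageI[OF wc, of E2] by (rule subsetD)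
    then show "w \<in> closure ?R2" using b.E1_on1[OF w] by simp
  qed
next
  assume h: "range E1 \<subseteq> closure ?R1 \<and> range E2 \<subseteq> closure ?R2"
  let ?g = "\<lambda>p::'v\<times>'v. fst p + snd p"
  have c: "continuous_on (closure (?R1 \<times> ?R2)) ?g" by (intro continuous_intros)
  have i: "?g ` (?R1 \<times> ?R2) \<subseteq> closure ?R"
  proof
    fix p assume "p \<in> ?g ` (?R1 \<times> ?R2)"
    then obtain a b where ab: "a \<in> ?R1" "b \<in> ?R2" "p = a + b" by auto
    then have "p \<in> {x + y | x y. x \<in> ?R1 \<and> y \<in> ?R2}" by blast
    then have "p \<in> ?R" by (simp only: ran_eq)
    then show "p \<in> closure ?R" using closure_subset by blast
  qed
  have j: "?g ` closure (?R1 \<times> ?R2) \<subseteq> closure ?R" by (rule image_closure_subset[OF c closed_closure i])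
  show "UNIV \<subseteq> closure ?R"
  proof
    fix z :: 'v
    have a1: "E1 z \<in> closure ?R1" using h by blast
    have a2: "E2 z \<in> closure ?R2" using h by blast
    have "(E1 z, E2 z) \<in> closure (?R1 \<times> ?R2)" unfolding closure_Times using a1 a2 by (rule SigmaI)
    then have "?g (E1 z, E2 z) \<in> closure ?R" using j by blast
    then show "z \<in> closure ?R" using a.Esum by simp
  qed
qed

lemma R_full: "ranQ re nrm s D f = UNIV \<Longrightarrow> range E1 \<subseteq> ranQ re nrm s (E1 ` D) f \<and> range E2 \<subseteq> ranQ re nrm s (E2 ` D) f"
proof -
  assume h: "ranQ re nrm s D f = UNIV"
  have 1: "w \<in> ranQ re nrm s (E1 ` D) f" if "w \<in> range E1" for w
  proof -
    have "w \<in> ranQ re nrm s D f" using h by simp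
    then have "w \<in> {x + y | x y. x \<in> ranQ re nrm s (E1 ` D) f \<and> y \<in> ranQ re nrm s (E2 ` D) f}"
      by (simp only: ran_eq)
    then obtain x y where xy: "x \<in> ranQ re nrm s (E1 ` D) f" "y \<in> ranQ re nrm s (E2 ` D) f" "w = x + y"
      by blast
    have "E1 x = x" using subsetD[OF ran_sub1[of re nrm s], OF xy(1)] by (rule a.E1_on1)
    moreover have "E1 y = 0" using subsetD[OF ran_sub2[of re nrm s], OF xy(2)] by (rule a.E1_on2)
    ultimately have "E1 w = x" using xy a.E1add by simp
    then show ?thesis using that a.E1_on1 xy by metis
  qed
  have 2: "w \<in> ranQ re nrm s (E2 ` D) f" if "w \<in> range E2" for w
  proof -
    have "w \<in> ranQ re nrm s D f" using h by simp
    then have "w \<in> {x + y | x y. x \<in> ranQ re nrm s (E1 ` D) f \<and> y \<in> ranQ re nrm s (E2 ` D) f}"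
      by (simp only: ran_eq)
    then obtain x y where xy: "x \<in> ranQ re nrm s (E1 ` D) f" "y \<in> ranQ re nrm s (E2 ` D) f" "w = x + y"
      by blast
    have "E2 y = y" using subsetD[OF ran_sub2[of re nrm s], OF xy(2)] by (rule b.E1_on1)
    moreover have "E2 x = 0" using subsetD[OF ran_sub1[of re nrm s], OF xy(1)] by (rule b.E1_on2)
    ultimately have "E2 w = y" using xy a.E2add by simp
    then show ?thesis using that b.E1_on1 xy by metis
  qed
  show ?thesis using 1 2 by blast
qed

lemma R_full2: "range E1 \<subseteq> ranQ re nrm s (E1 ` D) f \<Longrightarrow> range E2 \<subseteq> ranQ re nrm s (E2 ` D) f \<Longrightarrow> ranQ re nrm s D f = UNIV"
proof -
  assume h1: "range E1 \<subseteq> ranQ re nrm s (E1 ` D) f" and h2: "range E2 \<subseteq> ranQ re nrm s (E2 ` D) f"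
  have "z \<in> ranQ re nrm s D f" for z
  proof -
    have "E1 z \<in> ranQ re nrm s (E1 ` D) f" "E2 z \<in> ranQ re nrm s (E2 ` D) f" using h1 h2 by auto
    then have "E1 z + E2 z \<in> {x + y | x y. x \<in> ranQ re nrm s (E1 ` D) f \<and> y \<in> ranQ re nrm s (E2 ` D) f}"
      by blast
    then have "E1 z + E2 z \<in> ranQ re nrm s D f" by (simp only: ran_eq)
    then show ?thesis by (simp only: a.Esum)
  qed
  then show ?thesis by blast
qed


lemma zero_E1D: "0 \<in> E1 ` D"
  using a.D0 linear_0[OF a.E1lin] by (metis image_eqI)
lemma zero_E2D: "0 \<in> E2 ` D"
  using a.D0 linear_0[OF b.E1lin] by (metis image_eqI)

lemma Sc_Sr:
  assumes disj: "sigmaS F0 re nrm (range E1) (E1 ` D) f \<inter> sigmaS F0 re nrm (range E2) (E2 ` D) f = {}"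
  shows "sigmaSc F0 re nrm UNIV D f
              = sigmaSc F0 re nrm (range E1) (E1 ` D) f \<union> sigmaSc F0 re nrm (range E2) (E2 ` D) f
          \<and> sigmaSr F0 re nrm UNIV D f
              = sigmaSr F0 re nrm (range E1) (E1 ` D) f \<union> sigmaSr F0 re nrm (range E2) (E2 ` D) f"
proof -
  have H: "((kerQ_trivial re nrm s D f \<and> UNIV \<subseteq> closure (ranQ re nrm s D f) \<and> \<not> ranQ re nrm s D f = UNIV)
      = ((kerQ_trivial re nrm s (E1 ` D) f \<and> range E1 \<subseteq> closure (ranQ re nrm s (E1 ` D) f) \<and> \<not> range E1 \<subseteq> ranQ re nrm s (E1 ` D) f)
       \<or> (kerQ_trivial re nrm s (E2 ` D) f \<and> range E2 \<subseteq> closure (ranQ re nrm s (E2 ` D) f) \<and> \<not> range E2 \<subseteq> ranQ re nrm s (E2 ` D) f)))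
    \<and> ((kerQ_trivial re nrm s D f \<and> \<not> UNIV \<subseteq> closure (ranQ re nrm s D f))
      = ((kerQ_trivial re nrm s (E1 ` D) f \<and> \<not> range E1 \<subseteq> closure (ranQ re nrm s (E1 ` D) f))
       \<or> (kerQ_trivial re nrm s (E2 ` D) f \<and> \<not> range E2 \<subseteq> closure (ranQ re nrm s (E2 ` D) f))))"
    if s: "s \<in> F0" for s
  proof -
    have f1: "kerQ_trivial re nrm s D f = (kerQ_trivial re nrm s (E1 ` D) f \<and> kerQ_trivial re nrm s (E2 ` D) f)"
      by (rule ker_eq)
    have f2: "(UNIV \<subseteq> closure (ranQ re nrm s D f)) = (range E1 \<subseteq> closure (ranQ re nrm s (E1 ` D) f) \<and> range E2 \<subseteq> closure (ranQ re nrm s (E2 ` D) f))"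
      by (rule clos_eq)
    have f3: "s \<in> rhoS F0 re nrm (range E1) (E1 ` D) f \<or> s \<in> rhoS F0 re nrm (range E2) (E2 ` D) f"
    proof -
      have "s \<notin> sigmaS F0 re nrm (range E1) (E1 ` D) f \<inter> sigmaS F0 re nrm (range E2) (E2 ` D) f"
        using disj by simp
      then show ?thesis using s by (simp add: sigmaS_def)
    qed
    have f4: "kerQ_trivial re nrm s (E1 ` D) f \<and> range E1 \<subseteq> ranQ re nrm s (E1 ` D) f"
      if "s \<in> rhoS F0 re nrm (range E1) (E1 ` D) f"
      using rho_ker[OF that zero_E1D a.f0] rho_ran[OF that] by (rule conjI)
    have f5: "kerQ_trivial re nrm s (E2 ` D) f \<and> range E2 \<subseteq> ranQ re nrm s (E2 ` D) f"
      if "s \<in> rhoS F0 re nrm (range E2) (E2 ` D) f"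
      using rho_ker[OF that zero_E2D a.f0] rho_ran[OF that] by (rule conjI)
    have f6: "(ranQ re nrm s D f = UNIV) = (range E1 \<subseteq> ranQ re nrm s (E1 ` D) f \<and> range E2 \<subseteq> ranQ re nrm s (E2 ` D) f)"
    proof
      assume "ranQ re nrm s D f = UNIV" then show "range E1 \<subseteq> ranQ re nrm s (E1 ` D) f \<and> range E2 \<subseteq> ranQ re nrm s (E2 ` D) f"
        by (rule R_full)
    next
      assume "range E1 \<subseteq> ranQ re nrm s (E1 ` D) f \<and> range E2 \<subseteq> ranQ re nrm s (E2 ` D) f"
      then show "ranQ re nrm s D f = UNIV" by (elim conjE) (rule R_full2)
    qed
    have f7: "range E1 \<subseteq> closure (ranQ re nrm s (E1 ` D) f)" if "range E1 \<subseteq> ranQ re nrm s (E1 ` D) f"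
      using that closure_subset by (rule subset_trans)
    have f8: "range E2 \<subseteq> closure (ranQ re nrm s (E2 ` D) f)" if "range E2 \<subseteq> ranQ re nrm s (E2 ` D) f"
      using that closure_subset by (rule subset_trans)
    show ?thesis by (rule prop_helper[OF f1 f2 f3 f4 f5 f6 f7 f8])
  qed
  have ne1: "(ranQ re nrm s (E1 ` D) f \<noteq> range E1) = (\<not> range E1 \<subseteq> ranQ re nrm s (E1 ` D) f)" for s
    using ran_sub1[of re nrm s] subset_antisym by metis
  have ne2: "(ranQ re nrm s (E2 ` D) f \<noteq> range E2) = (\<not> range E2 \<subseteq> ranQ re nrm s (E2 ` D) f)" for s
    using ran_sub2[of re nrm s] subset_antisym by metis
  have 1: "s \<in> sigmaSc F0 re nrm UNIV D f \<longleftrightarrow>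
     s \<in> sigmaSc F0 re nrm (range E1) (E1 ` D) f \<union> sigmaSc F0 re nrm (range E2) (E2 ` D) f" for s
  proof (cases "s \<in> F0")
    case True
    note HH = conjunct1[OF H[OF True]]
    show ?thesis by (simp only: sigmaSc_def mem_Collect_eq Un_iff ne1 ne2 HH True simp_thms)
  qed (simp add: sigmaSc_def)
  have 2: "s \<in> sigmaSr F0 re nrm UNIV D f \<longleftrightarrow>
     s \<in> sigmaSr F0 re nrm (range E1) (E1 ` D) f \<union> sigmaSr F0 re nrm (range E2) (E2 ` D) f" for s
  proof (cases "s \<in> F0")
    case True
    note HH = conjunct2[OF H[OF True]]
    show ?thesis by (simp only: sigmaSr_def mem_Collect_eq Un_iff HH True simp_thms)
  qed (simp add: sigmaSr_def)
  show ?thesis using 1 2 by (intro conjI set_eqI) simp_all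
qed

end

lemma brop:
  assumes A1: "\<And>r. \<exists>a. \<forall>x. rmul x a = r *\<^sub>R x" and b: "bounded_rop rmul E"
  shows "E (x + y) = E x + E y" "E (r *\<^sub>R x) = r *\<^sub>R E x" "\<exists>K. \<forall>x. norm (E x) \<le> K * norm x"
proof -
  show "E (x + y) = E x + E y" using b unfolding bounded_rop_def rlinear_on_def by blast
  obtain a where a: "\<forall>x. rmul x a = r *\<^sub>R x" using A1 by blast
  have "E (rmul x a) = rmul (E x) a" using b unfolding bounded_rop_def rlinear_on_def by blast
  then show "E (r *\<^sub>R x) = r *\<^sub>R E x" using a by simp
  show "\<exists>K. \<forall>x. norm (E x) \<le> K * norm x" using b unfolding bounded_rop_def by blast
qed

lemma generic:
  fixes rmul :: "'v::real_normed_vector \<Rightarrow> 'f \<Rightarrow> 'v"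
  assumes A1: "\<And>r. \<exists>a. \<forall>x. rmul x a = r *\<^sub>R x"
  and HK: "\<And>D f. inK D f \<Longrightarrow> 0 \<in> D \<and> (\<forall>x\<in>D. \<forall>y\<in>D. x + y \<in> D \<and> f (x + y) = f x + f y)"
  shows "Thm17_claim rmul F0 re nrm inK"
  unfolding Thm17_claim_def
proof (intro allI impI)
  fix D f E1 E2
  assume H: "inK D f \<and> rhoS F0 re nrm UNIV D f \<noteq> {}
     \<and> bounded_rop rmul E1 \<and> bounded_rop rmul E2
     \<and> E1 \<circ> E1 = E1 \<and> E2 \<circ> E2 = E2
     \<and> (\<forall>x. E1 x + E2 x = x)
     \<and> (\<forall>E\<in>{E1, E2}. E ` D \<subseteq> D \<and> f ` (E ` D) \<subseteq> range E
                       \<and> closed_rop rmul (range E) (E ` D) f)"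
  have "inK D f" using H by blast
  then have K: "0 \<in> D \<and> (\<forall>x\<in>D. \<forall>y\<in>D. x + y \<in> D \<and> f (x + y) = f x + f y)" by (rule HK)
  have b1: "bounded_rop rmul E1" and b2: "bounded_rop rmul E2" using H by blast+
  have c1: "E1 \<circ> E1 = E1" and c2: "E2 \<circ> E2 = E2" using H by blast+
  have i1: "E1 (E1 x) = E1 x" for x using fun_cong[OF c1, of x] by simp
  have i2: "E2 (E2 x) = E2 x" for x using fun_cong[OF c2, of x] by simp
  have sm: "E1 x + E2 x = x" for x using H by blast
  have sm': "E2 x + E1 x = x" for x using sm[of x] by (simp add: add.commute)
  have d1: "E1 ` D \<subseteq> D" "f ` (E1 ` D) \<subseteq> range E1" using H by blast+
  have d2: "E2 ` D \<subseteq> D" "f ` (E2 ` D) \<subseteq> range E2" using H by blast+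
  have ad1: "E1 (x + y) = E1 x + E1 y" for x y using brop(1)[OF A1 b1] .
  have ad2: "E2 (x + y) = E2 x + E2 y" for x y using brop(1)[OF A1 b2] .
  have sc1: "E1 (r *\<^sub>R x) = r *\<^sub>R E1 x" for r x using brop(2)[OF A1 b1] .
  have sc2: "E2 (r *\<^sub>R x) = r *\<^sub>R E2 x" for r x using brop(2)[OF A1 b2] .
  have bd1: "\<exists>K. \<forall>x. norm (E1 x) \<le> K * norm x" using brop(3)[OF A1 b1] .
  have bd2: "\<exists>K. \<forall>x. norm (E2 x) \<le> K * norm x" using brop(3)[OF A1 b2] .
  have K0: "0 \<in> D" using K by blast
  have Kadd: "x + y \<in> D" if "x \<in> D" "y \<in> D" for x y using K that by blast
  have Kf: "f (x + y) = f x + f y" if "x \<in> D" "y \<in> D" for x y using K that by blast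
  have p1: "pp D f E1 E2"
    by (rule pp.intro[OF K0 Kadd Kf ad1 ad2 sc1 sc2 bd1 bd2 i1 i2 sm d1(1) d2(1) d1(2) d2(2)])
  have p2: "pp D f E2 E1"
    by (rule pp.intro[OF K0 Kadd Kf ad2 ad1 sc2 sc1 bd2 bd1 i2 i1 sm' d2(1) d1(1) d2(2) d1(2)])
  interpret ppb D f E1 E2 using p1 p2 by intro_locales
  show "(\<forall>E\<in>{E1, E2}. \<forall>v\<in>D. E (f v) = f (E v))
     \<and> (\<forall>E\<in>{E1, E2}. dom2 (E ` D) f = E ` (dom2 D f))
     \<and> (\<forall>s\<in>F0. ranQ re nrm s D f
              = {x + y | x y. x \<in> ranQ re nrm s (E1 ` D) f \<and> y \<in> ranQ re nrm s (E2 ` D) f}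
            \<and> ranQ re nrm s (E1 ` D) f \<inter> ranQ re nrm s (E2 ` D) f = {0})
     \<and> sigmaS F0 re nrm UNIV D f
         = sigmaS F0 re nrm (range E1) (E1 ` D) f \<union> sigmaS F0 re nrm (range E2) (E2 ` D) f
     \<and> sigmaSp F0 re nrm D f = sigmaSp F0 re nrm (E1 ` D) f \<union> sigmaSp F0 re nrm (E2 ` D) f
     \<and> (sigmaS F0 re nrm (range E1) (E1 ` D) f \<inter> sigmaS F0 re nrm (range E2) (E2 ` D) f = {}
        \<longrightarrow> sigmaSc F0 re nrm UNIV D f
              = sigmaSc F0 re nrm (range E1) (E1 ` D) f \<union> sigmaSc F0 re nrm (range E2) (E2 ` D) f
          \<and> sigmaSr F0 re nrm UNIV D f
              = sigmaSr F0 re nrm (range E1) (E1 ` D) f \<union> sigmaSr F0 re nrm (range E2) (E2 ` D) f)"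
  proof (intro conjI impI)
    show "\<forall>E\<in>{E1, E2}. \<forall>v\<in>D. E (f v) = f (E v)" using a.comm b.comm by blast
    show "\<forall>E\<in>{E1, E2}. dom2 (E ` D) f = E ` (dom2 D f)" using a.dom2_eq b.dom2_eq by blast
    show "\<forall>s\<in>F0. ranQ re nrm s D f
              = {x + y | x y. x \<in> ranQ re nrm s (E1 ` D) f \<and> y \<in> ranQ re nrm s (E2 ` D) f}
            \<and> ranQ re nrm s (E1 ` D) f \<inter> ranQ re nrm s (E2 ` D) f = {0}"
    proof
      fix s assume "s \<in> F0"
      show "ranQ re nrm s D f
              = {x + y | x y. x \<in> ranQ re nrm s (E1 ` D) f \<and> y \<in> ranQ re nrm s (E2 ` D) f}
            \<and> ranQ re nrm s (E1 ` D) f \<inter> ranQ re nrm s (E2 ` D) f = {0}"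
        using ran_eq ran_int by (rule conjI)
    qed
    show "sigmaS F0 re nrm UNIV D f
         = sigmaS F0 re nrm (range E1) (E1 ` D) f \<union> sigmaS F0 re nrm (range E2) (E2 ` D) f"
    proof (rule set_eqI)
      fix s
      show "s \<in> sigmaS F0 re nrm UNIV D f \<longleftrightarrow>
         s \<in> sigmaS F0 re nrm (range E1) (E1 ` D) f \<union> sigmaS F0 re nrm (range E2) (E2 ` D) f"
        by (simp only: sigmaS_def Diff_iff Un_iff rho_eq[of s F0 re nrm]) blast
    qed
    show "sigmaSp F0 re nrm D f = sigmaSp F0 re nrm (E1 ` D) f \<union> sigmaSp F0 re nrm (E2 ` D) f"
    proof (rule set_eqI)
      fix s
      show "s \<in> sigmaSp F0 re nrm D f \<longleftrightarrow> s \<in> sigmaSp F0 re nrm (E1 ` D) f \<union> sigmaSp F0 re nrm (E2 ` D) f"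
        by (simp only: sigmaSp_def mem_Collect_eq Un_iff ker_eq[of re nrm s]) blast
    qed
    assume dj: "sigmaS F0 re nrm (range E1) (E1 ` D) f \<inter> sigmaS F0 re nrm (range E2) (E2 ` D) f = {}"
    show "sigmaSc F0 re nrm UNIV D f
              = sigmaSc F0 re nrm (range E1) (E1 ` D) f \<union> sigmaSc F0 re nrm (range E2) (E2 ` D) f"
      using Sc_Sr[OF dj] by blast
    show "sigmaSr F0 re nrm UNIV D f
              = sigmaSr F0 re nrm (range E1) (E1 ` D) f \<union> sigmaSr F0 re nrm (range E2) (E2 ` D) f"
      using Sc_Sr[OF dj] by blast
  qed
qed


lemma quatA1: "two_sided_quat_banach lmul rmul \<Longrightarrow> \<exists>a. \<forall>x. rmul x a = r *\<^sub>R x"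
proof -
  assume h: "two_sided_quat_banach lmul rmul"
  have "\<forall>x. rmul x (qof_real r) = r *\<^sub>R x" using h unfolding two_sided_quat_banach_def by blast
  then show ?thesis by blast
qed

lemma quatHK: "closed_rop rmul UNIV D f \<Longrightarrow> 0 \<in> D \<and> (\<forall>x\<in>D. \<forall>y\<in>D. x + y \<in> D \<and> f (x + y) = f x + f y)"
  unfolding closed_rop_def rlinear_on_def rsubmod_def by blast

lemma cl_sign_empty: "cl_sign (A::'n::{finite,linorder} set) {} = 1"
proof -
  have "{(a, b). a \<in> A \<and> b \<in> ({}::'n::{finite,linorder} set) \<and> b < a} = {}" by auto
  then show ?thesis unfolding cl_sign_def by simp
qed

lemma clA1: "\<exists>a. \<forall>x. cl_rmul (x :: 'w::real_vector ^ ('n::{finite,linorder} set)) a = r *\<^sub>R x"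
proof (intro exI allI)
  fix x :: "'w ^ ('n set)"
  define a :: "real ^ ('n set)" where "a = (\<chi> B. if B = {} then r else 0)"
  have t: "(if (A - B) \<union> (B - A) = C then (cl_sign A B * a $ B) *\<^sub>R (x $ A) else 0)
      = (if B = {} then (if A = C then r *\<^sub>R x $ A else 0) else 0)" for A B C
    by (cases "B = {}") (simp_all add: a_def cl_sign_empty)
  show "cl_rmul x a = r *\<^sub>R x"
    unfolding cl_rmul_def vec_eq_iff
    by (simp add: t)
qed

lemma if_add0: "(if P then a + b else 0) = (if P then a else 0) + (if P then b else (0::'a::monoid_add))"
  by simp

lemma clHK: "paravector_type_op (D :: ('w::real_normed_vector ^ ('n::{finite,linorder} set)) set) f \<Longrightarrow> 0 \<in> D \<and> (\<forall>x\<in>D. \<forall>y\<in>D. x + y \<in> D \<and> f (x + y) = f x + f y)"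
proof -
  assume "paravector_type_op D f"
  then obtain Tdom :: "'n::{finite,linorder} option \<Rightarrow> 'w::real_normed_vector set" and Tfun
    where T: "\<And>j. real_closed_op (Tdom j) (Tfun j)"
      and Deq: "D = {v. \<forall>A j. v $ A \<in> Tdom j}"
      and feq: "\<And>v. v\<in>D \<Longrightarrow> f v = (\<chi> C. Tfun None (v $ C)
          + (\<Sum>i\<in>UNIV. \<Sum>A\<in>UNIV. if ({i} - A) \<union> (A - {i}) = C
                then cl_sign {i} A *\<^sub>R Tfun (Some i) (v $ A) else 0))"
    unfolding paravector_type_op_def by blast
  have sub: "subspace (Tdom j)" for j using T[of j] unfolding real_closed_op_def by blast
  have tadd: "Tfun j (a + b) = Tfun j a + Tfun j b" if "a \<in> Tdom j" "b \<in> Tdom j" for j a b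
    using T[of j] that unfolding real_closed_op_def by blast
  have "0 \<in> D" unfolding Deq using sub subspace_0 by auto
  moreover have "x + y \<in> D \<and> f (x + y) = f x + f y" if x: "x \<in> D" and y: "y \<in> D" for x y
  proof
    have xa: "x $ A \<in> Tdom j" and ya: "y $ A \<in> Tdom j" for A j using x y Deq by auto
    show xy: "x + y \<in> D" unfolding Deq using xa ya sub subspace_add by fastforce
    have e: "Tfun j (x $ A + y $ A) = Tfun j (x $ A) + Tfun j (y $ A)" for j A
      using tadd[OF xa ya] by simp
    have e': "Tfun j ((x + y) $ A) = Tfun j (x $ A) + Tfun j (y $ A)" for j A
      using e by simp
    show "f (x + y) = f x + f y"
      unfolding feq[OF xy] feq[OF x] feq[OF y] vec_eq_iff
      apply (simp only: vec_lambda_beta vector_add_component e' e)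
      by (simp add: scaleR_add_right if_add0 sum.distrib algebra_simps cong: if_cong)
  qed
  ultimately show ?thesis by blast
qed

theorem mainTheorem17:
  shows "(\<forall>(lmul :: quat \<Rightarrow> 'v::banach \<Rightarrow> 'v) rmul. two_sided_quat_banach lmul rmul \<longrightarrow>
            Thm17_claim rmul UNIV qre qnorm (closed_rop rmul UNIV))
       \<and> Thm17_claim (cl_rmul :: 'w::banach ^ ('n::{finite,linorder} set) \<Rightarrow> _ \<Rightarrow> _)
            paravectors cl_re cl_abs paravector_type_op"
proof (intro conjI allI impI)
  fix lmul :: "quat \<Rightarrow> 'v \<Rightarrow> 'v" and rmul
  assume h: "two_sided_quat_banach lmul rmul"
  show "Thm17_claim rmul UNIV qre qnorm (closed_rop rmul UNIV)"
    by (rule generic[OF quatA1[OF h] quatHK])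
next
  show "Thm17_claim (cl_rmul :: 'w::banach ^ ('n::{finite,linorder} set) \<Rightarrow> _ \<Rightarrow> _)
            paravectors cl_re cl_abs paravector_type_op"
    by (rule generic[OF clA1 clHK])
qed

end
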